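(* Let $((A, \cdot), N)$ be a Nijenhuis algebra. Then the infinitesimal $(\mu_1, N_1)$ of any formal deformation of the Nijenhuis algebra $((A, \cdot), N)$ is a $2$-cocycle in the cochain complex $\{ \oplus_{n \geq 0} C^n_{\mathrm{NAlg}} ((A, N)), \delta_{\mathrm{NAlg}} \}$. Moreover, the cohomology class of the corresponding $2$-cocycle depends only on the equivalence class of the formal deformation.
   Context: Work over a field $\mathbf{k}$ of characteristic $0$. A Nijenhuis algebra $((A,\cdot),N)$ is an associative algebra $(A,\cdot)$ with a linear map $N:A\to A$ satisfying $N(a)\cdot N(b) = N(N(a)\cdot b + a\cdot N(b) - N(a\cdot b))$ for all $a,b\in A$. Write $\mu(a,b)=a\cdot b$. Formal deformation: formal sums $\mu_t=\sum_{i\ge 0} t^i\mu_i \in \mathrm{Hom}(A^{\otimes 2},A)[[t]]$ with $\mu_0=\mu$ and $N_t=\sum_{i\ge0} t^i N_i\in \mathrm{Hom}(A,A)[[t]]$ with $N_0=N$ such that $(A[[t]],\mu_t)$ is an associative algebra over $\mathbf{k}[[t]]$ and the $\mathbf{k}[[t]]$-linear extension $N_t$ is a Nijenhuis operator on it. The pair $(\mu_1,N_1)$ is called its infinitesimal. Two formal deformations $((A[[t]],\mu_t),N_t)$ and $((A[[t]],\mu'_t),N'_t)$ are equivalent if there is a $\mathbf{k}[[t]]$-linear map $\varphi_t=\sum_{i\ge0}t^i\varphi_i$, $\varphi_i\in\mathrm{Hom}(A,A)$, $\varphi_0=\mathrm{Id}_A$, with $\varphi_t(\mu_t(a,b))=\mu'_t(\varphi_t(a),\varphi_t(b))$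 and $\varphi_t\circ N_t=N'_t\circ\varphi_t$. The cochain complex: $C^0_{\mathrm{NAlg}}((A,N))=0$, $C^1_{\mathrm{NAlg}}((A,N))=\mathrm{Hom}(A,A)$, and $C^n_{\mathrm{NAlg}}((A,N))=\mathrm{Hom}(A^{\otimes n},A)\oplus\mathrm{Hom}(A^{\otimes n-1},A)$ for $n\ge2$, with $\delta_{\mathrm{NAlg}}(f)=(\delta_{\mathrm{Hoch}}(f),-\partial^N(f))$ for $f\in C^1$ and $\delta_{\mathrm{NAlg}}(\chi,F)=(\delta_{\mathrm{Hoch}}(\chi),\, d_N(F)+(-1)^n\partial^N(\chi))$ for $(\chi,F)\in C^n$, $n\ge2$. Here, for $f\in\mathrm{Hom}(A^{\otimes n},A)$: - $\delta_{\mathrm{Hoch}}$ is the Hochschild coboundary: $(\delta_{\mathrm{Hoch}}f)(a_1,\dots,a_{n+1})=a_1\cdot f(a_2,\dots,a_{n+1})+\sum_{i=1}^n(-1)^i f(a_1,\dots,a_i\cdot a_{i+1},\dots,a_{n+1})+(-1)^{n+1}f(a_1,\dots,a_n)\cdot a_{n+1}$; - $(d_Nf)(a_1,\dots,a_{n+1})=N(a_1)\cdot f(a_2,\dots,a_{n+1})-(-1)^n f(a_1,\dots,a_n)\cdot N(a_{n+1})+\sum_{i=1}^n(-1)^i f(a_1,\dots,a_{i-1},N(a_i)\cdot a_{i+1}+a_i\cdot N(a_{i+1})-N(a_i\cdot a_{i+1}),\dots,a_{n+1}) - N\big((\delta_{\mathrm{Hoch}}f)(a_1,\dots,a_{n+1})\big)$;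 - $\partial^N(f)(a_1,\dots,a_n)=f(N(a_1),\dots,N(a_n))-\sum_{i}N\big(f(N(a_1),\dots,a_i,\dots,N(a_n))\big)+\sum_{i<j}N^2\big(f(N(a_1),\dots,a_i,\dots,a_j,\dots,N(a_n))\big)-\cdots+(-1)^nN^n(f(a_1,\dots,a_n))$ (the $k$-th sum runs over choices of $k$ arguments left without $N$, with $N^k$ applied outside and sign $(-1)^k$). $(\delta_{\mathrm{NAlg}})^2=0$; its cohomology is $H^\bullet_{\mathrm{NAlg}}((A,N))$. *)

theory Defs
  imports Complex_Main
begin

text \<open>The underlying vector space A is a type 'a with a k-vector space structure given by
  scale :: 'k \<Rightarrow> 'a \<Rightarrow> 'a, where 'k is a field of characteristic 0.
  Hom(A,A) = k-linear maps, Hom(A\<otimes>A,A) = k-bilinear maps.\<close>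

definition klin :: "('k::field \<Rightarrow> 'a::ab_group_add \<Rightarrow> 'a) \<Rightarrow> ('a \<Rightarrow> 'a) \<Rightarrow> bool" where
  "klin scale f \<longleftrightarrow> Vector_Spaces.linear scale scale f"

definition kbilin :: "('k::field \<Rightarrow> 'a::ab_group_add \<Rightarrow> 'a) \<Rightarrow> ('a \<Rightarrow> 'a \<Rightarrow> 'a) \<Rightarrow> bool" where
  "kbilin scale m \<longleftrightarrow> (\<forall>x. klin scale (m x)) \<and> (\<forall>y. klin scale (\<lambda>x. m x y))"

definition assoc_algebra :: "('k::field \<Rightarrow> 'a::ab_group_add \<Rightarrow> 'a) \<Rightarrow> ('a \<Rightarrow> 'a \<Rightarrow> 'a) \<Rightarrow> bool" where
  "assoc_algebra scale mu \<longleftrightarrow> vector_space scale \<and> kbilin scale mu \<and>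
     (\<forall>a b c. mu (mu a b) c = mu a (mu b c))"

definition nijenhuis_identity :: "('a::ab_group_add \<Rightarrow> 'a \<Rightarrow> 'a) \<Rightarrow> ('a \<Rightarrow> 'a) \<Rightarrow> bool" where
  "nijenhuis_identity mu N \<longleftrightarrow>
     (\<forall>a b. mu (N a) (N b) = N (mu (N a) b + mu a (N b) - N (mu a b)))"

definition nijenhuis_algebra ::
  "('k::field \<Rightarrow> 'a::ab_group_add \<Rightarrow> 'a) \<Rightarrow> ('a \<Rightarrow> 'a \<Rightarrow> 'a) \<Rightarrow> ('a \<Rightarrow> 'a) \<Rightarrow> bool" where
  "nijenhuis_algebra scale mu N \<longleftrightarrow>
     assoc_algebra scale mu \<and> klin scale N \<and> nijenhuis_identity mu N"

section \<open>Formal power series A[[t]] = sequences nat \<Rightarrow> 'a (coefficient of t^n)\<close>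

text \<open>k[[t]]-bilinear extension of \<mu>_t = \<Sum> t^i \<mu>_i to A[[t]]:
  coefficient of t^n in \<mu>_t(x,y) is \<Sum>_{i+j+l=n} \<mu>_i(x_j, y_l).\<close>
definition ser_mul :: "(nat \<Rightarrow> 'a \<Rightarrow> 'a \<Rightarrow> 'a::ab_group_add) \<Rightarrow> (nat \<Rightarrow> 'a) \<Rightarrow> (nat \<Rightarrow> 'a) \<Rightarrow> nat \<Rightarrow> 'a" where
  "ser_mul mus x y n = (\<Sum>i\<le>n. \<Sum>j\<le>n - i. mus i (x j) (y (n - i - j)))"

text \<open>k[[t]]-linear extension of N_t = \<Sum> t^i N_i to A[[t]].\<close>
definition ser_app :: "(nat \<Rightarrow> 'a \<Rightarrow> 'a::ab_group_add) \<Rightarrow> (nat \<Rightarrow> 'a) \<Rightarrow> nat \<Rightarrow> 'a" where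
  "ser_app Ns x n = (\<Sum>i\<le>n. Ns i (x (n - i)))"

definition formal_deformation ::
  "('k::field \<Rightarrow> 'a::ab_group_add \<Rightarrow> 'a) \<Rightarrow> ('a \<Rightarrow> 'a \<Rightarrow> 'a) \<Rightarrow> ('a \<Rightarrow> 'a)
    \<Rightarrow> (nat \<Rightarrow> 'a \<Rightarrow> 'a \<Rightarrow> 'a) \<Rightarrow> (nat \<Rightarrow> 'a \<Rightarrow> 'a) \<Rightarrow> bool" where
  "formal_deformation scale mu N mus Ns \<longleftrightarrow>
     mus 0 = mu \<and> Ns 0 = N \<and>
     (\<forall>i. kbilin scale (mus i)) \<and> (\<forall>i. klin scale (Ns i)) \<and>
     (\<forall>x y z. ser_mul mus (ser_mul mus x y) z = ser_mul mus x (ser_mul mus y z)) \<and>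
     (\<forall>x y. ser_mul mus (ser_app Ns x) (ser_app Ns y) =
        ser_app Ns (\<lambda>n. ser_mul mus (ser_app Ns x) y n + ser_mul mus x (ser_app Ns y) n
                        - ser_app Ns (ser_mul mus x y) n))"

definition equivalent_deformations ::
  "('k::field \<Rightarrow> 'a::ab_group_add \<Rightarrow> 'a)
    \<Rightarrow> (nat \<Rightarrow> 'a \<Rightarrow> 'a \<Rightarrow> 'a) \<Rightarrow> (nat \<Rightarrow> 'a \<Rightarrow> 'a)
    \<Rightarrow> (nat \<Rightarrow> 'a \<Rightarrow> 'a \<Rightarrow> 'a) \<Rightarrow> (nat \<Rightarrow> 'a \<Rightarrow> 'a) \<Rightarrow> bool" where
  "equivalent_deformations scale mus Ns mus' Ns' \<longleftrightarrow>
     (\<exists>phis :: nat \<Rightarrow> 'a \<Rightarrow> 'a. phis 0 = id \<and> (\<forall>i. klin scale (phis i)) \<and>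
        (\<forall>x y. ser_app phis (ser_mul mus x y) = ser_mul mus' (ser_app phis x) (ser_app phis y)) \<and>
        (\<forall>x. ser_app phis (ser_app Ns x) = ser_app Ns' (ser_app phis x)))"

definition hoch1 :: "('a::ab_group_add \<Rightarrow> 'a \<Rightarrow> 'a) \<Rightarrow> ('a \<Rightarrow> 'a) \<Rightarrow> 'a \<Rightarrow> 'a \<Rightarrow> 'a" where
  "hoch1 mu f a1 a2 = mu a1 (f a2) - f (mu a1 a2) + mu (f a1) a2"

definition hoch2 :: "('a::ab_group_add \<Rightarrow> 'a \<Rightarrow> 'a) \<Rightarrow> ('a \<Rightarrow> 'a \<Rightarrow> 'a) \<Rightarrow> 'a \<Rightarrow> 'a \<Rightarrow> 'a \<Rightarrow> 'a" where
  "hoch2 mu f a1 a2 a3 = mu a1 (f a2 a3) - f (mu a1 a2) a3 + f a1 (mu a2 a3) - mu (f a1 a2) a3"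

definition dN1 :: "('a::ab_group_add \<Rightarrow> 'a \<Rightarrow> 'a) \<Rightarrow> ('a \<Rightarrow> 'a) \<Rightarrow> ('a \<Rightarrow> 'a) \<Rightarrow> 'a \<Rightarrow> 'a \<Rightarrow> 'a" where
  "dN1 mu N f a1 a2 = mu (N a1) (f a2) + mu (f a1) (N a2)
     - f (mu (N a1) a2 + mu a1 (N a2) - N (mu a1 a2)) - N (hoch1 mu f a1 a2)"

definition partialN1 :: "('a::ab_group_add \<Rightarrow> 'a) \<Rightarrow> ('a \<Rightarrow> 'a) \<Rightarrow> 'a \<Rightarrow> 'a" where
  "partialN1 N f a1 = f (N a1) - N (f a1)"

definition partialN2 :: "('a::ab_group_add \<Rightarrow> 'a) \<Rightarrow> ('a \<Rightarrow> 'a \<Rightarrow> 'a) \<Rightarrow> 'a \<Rightarrow> 'a \<Rightarrow> 'a" where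
  "partialN2 N f a1 a2 = f (N a1) (N a2) - N (f a1 (N a2)) - N (f (N a1) a2) + N (N (f a1 a2))"

definition deltaNAlg1 :: "('a::ab_group_add \<Rightarrow> 'a \<Rightarrow> 'a) \<Rightarrow> ('a \<Rightarrow> 'a) \<Rightarrow> ('a \<Rightarrow> 'a)
    \<Rightarrow> ('a \<Rightarrow> 'a \<Rightarrow> 'a) \<times> ('a \<Rightarrow> 'a)" where
  "deltaNAlg1 mu N f = (hoch1 mu f, \<lambda>a. - partialN1 N f a)"

definition deltaNAlg2 :: "('a::ab_group_add \<Rightarrow> 'a \<Rightarrow> 'a) \<Rightarrow> ('a \<Rightarrow> 'a) \<Rightarrow> ('a \<Rightarrow> 'a \<Rightarrow> 'a) \<times> ('a \<Rightarrow> 'a)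
    \<Rightarrow> ('a \<Rightarrow> 'a \<Rightarrow> 'a \<Rightarrow> 'a) \<times> ('a \<Rightarrow> 'a \<Rightarrow> 'a)" where
  "deltaNAlg2 mu N c = (hoch2 mu (fst c), \<lambda>a1 a2. dN1 mu N (snd c) a1 a2 + partialN2 N (fst c) a1 a2)"

definition cochain1 :: "('k::field \<Rightarrow> 'a::ab_group_add \<Rightarrow> 'a) \<Rightarrow> ('a \<Rightarrow> 'a) \<Rightarrow> bool" where
  "cochain1 scale f \<longleftrightarrow> klin scale f"

definition cochain2 :: "('k::field \<Rightarrow> 'a::ab_group_add \<Rightarrow> 'a) \<Rightarrow> ('a \<Rightarrow> 'a \<Rightarrow> 'a) \<times> ('a \<Rightarrow> 'a) \<Rightarrow> bool" where
  "cochain2 scale c \<longleftrightarrow> kbilin scale (fst c) \<and> klin scale (snd c)"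

definition cocycle2 :: "('k::field \<Rightarrow> 'a::ab_group_add \<Rightarrow> 'a) \<Rightarrow> ('a \<Rightarrow> 'a \<Rightarrow> 'a) \<Rightarrow> ('a \<Rightarrow> 'a)
    \<Rightarrow> ('a \<Rightarrow> 'a \<Rightarrow> 'a) \<times> ('a \<Rightarrow> 'a) \<Rightarrow> bool" where
  "cocycle2 scale mu N c \<longleftrightarrow> cochain2 scale c \<and> deltaNAlg2 mu N c = (\<lambda>a b c. 0, \<lambda>a b. 0)"

definition cohomologous2 :: "('k::field \<Rightarrow> 'a::ab_group_add \<Rightarrow> 'a) \<Rightarrow> ('a \<Rightarrow> 'a \<Rightarrow> 'a) \<Rightarrow> ('a \<Rightarrow> 'a)
    \<Rightarrow> ('a \<Rightarrow> 'a \<Rightarrow> 'a) \<times> ('a \<Rightarrow> 'a) \<Rightarrow> ('a \<Rightarrow> 'a \<Rightarrow> 'a) \<times> ('a \<Rightarrow> 'a) \<Rightarrow> bool" where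
  "cohomologous2 scale mu N c c' \<longleftrightarrow>
     (\<exists>f. cochain1 scale f \<and>
        deltaNAlg1 mu N f = (\<lambda>a b. fst c' a b - fst c a b, \<lambda>a. snd c' a - snd c a))"

end

theory Submission
  imports Defs
begin

lemma kl_add: "klin scale f \<Longrightarrow> f (x + y) = f x + f y"
  unfolding klin_def by (simp add: Vector_Spaces.linear_iff)

lemma kl_0: "klin scale f \<Longrightarrow> f 0 = 0"
  using kl_add[of scale f 0 0] by simp

lemma kl_neg: "klin scale f \<Longrightarrow> f (- x) = - f x"
proof -
  assume l: "klin scale f"
  have "f x + f (- x) = 0" using kl_add[OF l, of x "-x"] kl_0[OF l] by simp
  thus ?thesis by (rule minus_unique[symmetric])
qed

lemma kl_diff: "klin scale f \<Longrightarrow> f (x - y) = f x - f y"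
  by (metis diff_conv_add_uminus kl_add kl_neg)

lemma kl_negfun: "klin scale f \<Longrightarrow> klin scale (\<lambda>x. - f x)"
proof -
  assume l: "klin scale f"
  hence vs: "vector_space scale" and ad: "\<And>x y. f (x + y) = f x + f y"
    and sc: "\<And>c x. f (scale c x) = scale c (f x)"
    unfolding klin_def Vector_Spaces.linear_iff by auto
  have ms: "\<And>c x. scale c (- x) = - scale c x"
    by (rule module.scale_minus_right[OF vs[unfolded module_iff_vector_space[symmetric]]])
  show ?thesis unfolding klin_def Vector_Spaces.linear_iff
  proof (intro conjI allI)
    show "vector_space scale" by (rule vs)
    show "vector_space scale" by (rule vs)
    fix x y show "- f (x + y) = - f x + - f y" by (simp add: ad)
  next
    fix c x show "- f (scale c x) = scale c (- f x)" by (simp only: sc ms)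
  qed
qed

lemma sm0: "ser_mul mus x y 0 = mus 0 (x 0) (y 0)"
  by (simp add: ser_mul_def)

lemma sm1: "ser_mul mus x y (Suc 0) = mus 0 (x 0) (y (Suc 0)) + mus 0 (x (Suc 0)) (y 0) + mus (Suc 0) (x 0) (y 0)"
  by (simp add: ser_mul_def atMost_Suc algebra_simps)

lemma sa0: "ser_app Ns x 0 = Ns 0 (x 0)"
  by (simp add: ser_app_def)

lemma sa1: "ser_app Ns x (Suc 0) = Ns 0 (x (Suc 0)) + Ns (Suc 0) (x 0)"
  by (simp add: ser_app_def atMost_Suc algebra_simps)

definition dl :: "'a::ab_group_add \<Rightarrow> nat \<Rightarrow> 'a" where
  "dl a = (\<lambda>n. if n = 0 then a else 0)"

lemma dl0[simp]: "dl a 0 = a" and dl1[simp]: "dl a (Suc 0) = 0"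
  by (auto simp: dl_def)

lemma bil0: "kbilin scale m \<Longrightarrow> m x 0 = 0" "kbilin scale m \<Longrightarrow> m 0 y = 0"
  using kl_0 unfolding kbilin_def by metis+

lemma bilneg1: "kbilin scale m \<Longrightarrow> m (- x) y = - m x y"
  using kl_neg unfolding kbilin_def by metis

lemma bilneg2: "kbilin scale m \<Longrightarrow> m x (- y) = - m x y"
  using kl_neg unfolding kbilin_def by metis

theorem theorem4p1:
  fixes scale :: "'k::field_char_0 \<Rightarrow> 'a::ab_group_add \<Rightarrow> 'a"
    and mu :: "'a \<Rightarrow> 'a \<Rightarrow> 'a" and N :: "'a \<Rightarrow> 'a"
  assumes "nijenhuis_algebra scale mu N"
  shows "(\<forall>mus Ns. formal_deformation scale mu N mus Ns \<longrightarrow>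
            cocycle2 scale mu N (mus 1, Ns 1))
       \<and> (\<forall>mus Ns mus' Ns'. formal_deformation scale mu N mus Ns
            \<longrightarrow> formal_deformation scale mu N mus' Ns'
            \<longrightarrow> equivalent_deformations scale mus Ns mus' Ns'
            \<longrightarrow> cohomologous2 scale mu N (mus 1, Ns 1) (mus' 1, Ns' 1))"
proof (intro conjI allI impI)
  have muB: "kbilin scale mu" and NL: "klin scale N"
    using assms by (auto simp: nijenhuis_algebra_def assoc_algebra_def)
  fix mus Ns
  assume fd: "formal_deformation scale mu N mus Ns"
  have m0: "mus 0 = mu" and n0: "Ns 0 = N" and mB: "\<And>i. kbilin scale (mus i)"
    and nL: "\<And>i. klin scale (Ns i)"
    and as: "\<And>x y z. ser_mul mus (ser_mul mus x y) z = ser_mul mus x (ser_mul mus y z)"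
    and nj: "\<And>x y. ser_mul mus (ser_app Ns x) (ser_app Ns y) =
        ser_app Ns (\<lambda>n. ser_mul mus (ser_app Ns x) y n + ser_mul mus x (ser_app Ns y) n
                        - ser_app Ns (ser_mul mus x y) n)"
    using fd unfolding formal_deformation_def by auto
  note z = bil0[OF mB] bil0[OF muB] kl_0[OF nL] kl_0[OF NL]
  have H: "hoch2 mu (mus 1) a b c = 0" for a b c
  proof -
    have "ser_mul mus (ser_mul mus (dl a) (dl b)) (dl c) 1 = ser_mul mus (dl a) (ser_mul mus (dl b) (dl c)) 1"
      using as by simp
    thus ?thesis by (simp add: sm0 sm1 m0 z hoch2_def algebra_simps)
  qed
  have D: "dN1 mu N (Ns 1) a b + partialN2 N (mus 1) a b = 0" for a b
  proof -
    have "ser_mul mus (ser_app Ns (dl a)) (ser_app Ns (dl b)) 1 = ser_app Ns (\<lambda>n. ser_mul mus (ser_app Ns (dl a)) (dl b) n + ser_mul mus (dl a) (ser_app Ns (dl b)) n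
                        - ser_app Ns (ser_mul mus (dl a) (dl b)) n) 1"
      using nj by metis
    thus ?thesis
      by (simp add: sm0 sm1 sa0 sa1 m0 n0 z dN1_def partialN2_def hoch1_def kl_add[OF NL] kl_diff[OF NL] algebra_simps)
  qed
  show "cocycle2 scale mu N (mus 1, Ns 1)"
    unfolding cocycle2_def cochain2_def deltaNAlg2_def
    using H D mB nL by (auto simp: fun_eq_iff)
next
  have muB: "kbilin scale mu" and NL: "klin scale N"
    using assms by (auto simp: nijenhuis_algebra_def assoc_algebra_def)
  fix mus Ns mus' Ns'
  assume fd: "formal_deformation scale mu N mus Ns" and fd': "formal_deformation scale mu N mus' Ns'"
    and eq: "equivalent_deformations scale mus Ns mus' Ns'"
  have m0: "mus 0 = mu" and n0: "Ns 0 = N" and mB: "\<And>i. kbilin scale (mus i)"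
    and nL: "\<And>i. klin scale (Ns i)"
    using fd unfolding formal_deformation_def by auto
  have m0': "mus' 0 = mu" and n0': "Ns' 0 = N" and mB': "\<And>i. kbilin scale (mus' i)"
    and nL': "\<And>i. klin scale (Ns' i)"
    using fd' unfolding formal_deformation_def by auto
  obtain phis where p0: "phis 0 = id" and pL: "\<And>i. klin scale (phis i)"
    and pm: "\<And>x y. ser_app phis (ser_mul mus x y) = ser_mul mus' (ser_app phis x) (ser_app phis y)"
    and pn: "\<And>x. ser_app phis (ser_app Ns x) = ser_app Ns' (ser_app phis x)"
    using eq unfolding equivalent_deformations_def by blast
  note z = bil0[OF mB] bil0[OF mB'] bil0[OF muB] kl_0[OF nL] kl_0[OF nL'] kl_0[OF NL] kl_0[OF pL]
  have E1: "mus' (Suc 0) a b = mus (Suc 0) a b + phis (Suc 0) (mu a b) - mu (phis (Suc 0) a) b - mu a (phis (Suc 0) b)" for a b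
  proof -
    have "ser_app phis (ser_mul mus (dl a) (dl b)) 1 = ser_mul mus' (ser_app phis (dl a)) (ser_app phis (dl b)) 1"
      using pm by simp
    thus ?thesis by (simp add: sm0 sm1 sa0 sa1 m0 m0' p0 z algebra_simps)
  qed
  have E2: "Ns' (Suc 0) a = Ns (Suc 0) a + phis (Suc 0) (N a) - N (phis (Suc 0) a)" for a
  proof -
    have "ser_app phis (ser_app Ns (dl a)) 1 = ser_app Ns' (ser_app phis (dl a)) 1"
      using pn by simp
    thus ?thesis by (simp add: sa0 sa1 n0 n0' p0 z algebra_simps)
  qed
  show "cohomologous2 scale mu N (mus 1, Ns 1) (mus' 1, Ns' 1)"
    unfolding cohomologous2_def
  proof (intro exI conjI)
    show "cochain1 scale (\<lambda>x. - phis 1 x)" using kl_negfun[OF pL] by (simp add: cochain1_def)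
    show "deltaNAlg1 mu N (\<lambda>x. - phis 1 x) =
        (\<lambda>a b. fst (mus' 1, Ns' 1) a b - fst (mus 1, Ns 1) a b, \<lambda>a. snd (mus' 1, Ns' 1) a - snd (mus 1, Ns 1) a)"
    proof -
      have a: "hoch1 mu (\<lambda>x. - phis 1 x) a b = mus' 1 a b - mus 1 a b" for a b
        unfolding hoch1_def bilneg1[OF muB] bilneg2[OF muB] One_nat_def E1
        by (simp add: algebra_simps)
      have b: "- partialN1 N (\<lambda>x. - phis 1 x) a = Ns' 1 a - Ns 1 a" for a
        unfolding partialN1_def kl_neg[OF NL] One_nat_def E2
        by (simp add: algebra_simps)
      show ?thesis unfolding deltaNAlg1_def fst_conv snd_conv
        using a b by (simp add: fun_eq_iff del: One_nat_def)
    qed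
  qed
qed

end
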